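(* Let $A$ (in $\mathcal H$) and $B$ (in $\mathcal K$) be closed densely defined operators with $A\dashv B$, with bounded intertwining operator $T$. Then: (i) $\sigma_p(A)\subseteq\sigma_p(B)$ and for every $\lambda\in\sigma_p(A)$, $m_A(\lambda)\le m_B(\lambda)$, where $m_A(\lambda)$ denotes the multiplicity (dimension of the eigenspace) of $\lambda$ as an eigenvalue of $A$; (ii) $\sigma_r(B)\subseteq\sigma_r(A)$; (iii) if $TD(A)=D(B)$, then $\sigma_p(B)=\sigma_p(A)$; (iv) if $T^{-1}$ is bounded (on its domain $R(T)$) and $TD(A)$ is a core for $B$, then $\sigma_p(B)\subseteq\sigma(A)$.
   Context: A bounded operator $T:\mathcal H\to\mathcal K$ is a bounded intertwining operator for $A$ and $B$ if $T D(A)\subseteq D(B)$ and $BT\xi=TA\xi$ for all $\xi\in D(A)$. $A$ is quasi-similar to $B$, written $A\dashv B$, if there is a bounded intertwining operator $T$ for $A$ and $B$ that is injective and whose inverse $T^{-1}$ (defined on $R(T)$) is densely defined, but not necessarily bounded. Spectral notions: $\rho(A)$ = set of $\lambda$ with $A-\lambda I$ injective and $(A-\lambda I)^{-1}$ bounded everywhere defined; $\sigma(A)=\mathbb C\setminus \rho(A)$; $\sigma_p(A)$ = eigenvalues; $\sigma_r(A)$ = set of $\lambda$ with $A-\lambda I$ injective and non-dense range. *)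

theory Defs
  imports "HOL-Analysis.Analysis" "HOL-Library.Extended_Nat"
begin

class complex_vector = real_vector +
  fixes scaleC :: "complex \<Rightarrow> 'a \<Rightarrow> 'a" (infixr \<open>*\<^sub>C\<close> 75)
  assumes scaleC_add_right: "a *\<^sub>C (x + y) = a *\<^sub>C x + a *\<^sub>C y"
    and scaleC_add_left: "(a + b) *\<^sub>C x = a *\<^sub>C x + b *\<^sub>C x"
    and scaleC_scaleC: "a *\<^sub>C (b *\<^sub>C x) = (a * b) *\<^sub>C x"
    and scaleC_one: "1 *\<^sub>C x = x"
    and scaleR_scaleC: "scaleR r x = (complex_of_real r) *\<^sub>C x"

class complex_normed_vector = complex_vector + real_normed_vector +
  assumes norm_scaleC: "norm (a *\<^sub>C x) = cmod a * norm x"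

class complex_inner = complex_normed_vector +
  fixes cinner :: "'a \<Rightarrow> 'a \<Rightarrow> complex"
  assumes cinner_commute: "cinner x y = cnj (cinner y x)"
    and cinner_add_left: "cinner (x + y) z = cinner x z + cinner y z"
    and cinner_scaleC_left: "cinner (a *\<^sub>C x) y = cnj a * cinner x y"
    and cinner_self_real: "Im (cinner x x) = 0"
    and cinner_self_nonneg: "0 \<le> Re (cinner x x)"
    and cinner_self_eq_zero: "cinner x x = 0 \<longleftrightarrow> x = 0"
    and norm_eq_sqrt_cinner: "norm x = sqrt (Re (cinner x x))"

class chilbert_space = complex_inner + complete_space

definition csubspace :: "'a::complex_vector set \<Rightarrow> bool" where
  "csubspace S \<longleftrightarrow> 0 \<in> S \<and> (\<forall>x\<in>S. \<forall>y\<in>S. x + y \<in> S) \<and> (\<forall>c. \<forall>x\<in>S. c *\<^sub>C x \<in> S)"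

definition cindependent :: "'a::complex_vector set \<Rightarrow> bool" where
  "cindependent S \<longleftrightarrow> (\<forall>F u. finite F \<longrightarrow> F \<subseteq> S \<longrightarrow> (\<Sum>x\<in>F. u x *\<^sub>C x) = 0 \<longrightarrow> (\<forall>x\<in>F. u x = 0))"

definition cdim :: "'a::complex_vector set \<Rightarrow> enat" where
  "cdim E = (SUP S \<in> {S. finite S \<and> S \<subseteq> E \<and> cindependent S}. enat (card S))"

text \<open>An operator on \<open>H\<close> is given by a domain \<open>D\<close> and a map \<open>A\<close> (relevant on \<open>D\<close> only).\<close>

definition lin_op :: "'a::complex_vector set \<Rightarrow> ('a \<Rightarrow> 'b::complex_vector) \<Rightarrow> bool" where
  "lin_op D A \<longleftrightarrow> csubspace D \<and> (\<forall>x\<in>D. \<forall>y\<in>D. A (x + y) = A x + A y)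
     \<and> (\<forall>c. \<forall>x\<in>D. A (c *\<^sub>C x) = c *\<^sub>C A x)"

definition graph :: "'a set \<Rightarrow> ('a \<Rightarrow> 'b) \<Rightarrow> ('a \<times> 'b) set" where
  "graph D A = {(x, A x) | x. x \<in> D}"

definition densely_defined :: "'a::complex_normed_vector set \<Rightarrow> bool" where
  "densely_defined D \<longleftrightarrow> closure D = UNIV"

definition closed_op :: "'a::complex_normed_vector set \<Rightarrow> ('a \<Rightarrow> 'b::complex_normed_vector) \<Rightarrow> bool" where
  "closed_op D A \<longleftrightarrow> lin_op D A \<and> closed (graph D A)"

definition cbounded_linear :: "('a::complex_normed_vector \<Rightarrow> 'b::complex_normed_vector) \<Rightarrow> bool" where
  "cbounded_linear T \<longleftrightarrow> (\<forall>x y. T (x + y) = T x + T y) \<and> (\<forall>c x. T (c *\<^sub>C x) = c *\<^sub>C T x)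
     \<and> (\<exists>K. \<forall>x. norm (T x) \<le> norm x * K)"

definition intertwining :: "('a::complex_normed_vector \<Rightarrow> 'b::complex_normed_vector)
     \<Rightarrow> 'a set \<Rightarrow> ('a \<Rightarrow> 'a) \<Rightarrow> 'b set \<Rightarrow> ('b \<Rightarrow> 'b) \<Rightarrow> bool" where
  "intertwining T DA A DB B \<longleftrightarrow> cbounded_linear T \<and> T ` DA \<subseteq> DB \<and> (\<forall>\<xi>\<in>DA. B (T \<xi>) = T (A \<xi>))"

text \<open>\<open>T\<close> witnesses quasi-similarity \<open>A \<dashv> B\<close>: injective, and \<open>T\<^sup>-\<^sup>1\<close> (domain \<open>R(T)\<close>) densely defined.\<close>
definition quasi_sim_witness :: "('a::complex_normed_vector \<Rightarrow> 'b::complex_normed_vector)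
     \<Rightarrow> 'a set \<Rightarrow> ('a \<Rightarrow> 'a) \<Rightarrow> 'b set \<Rightarrow> ('b \<Rightarrow> 'b) \<Rightarrow> bool" where
  "quasi_sim_witness T DA A DB B \<longleftrightarrow> intertwining T DA A DB B \<and> inj T \<and> densely_defined (range T)"

definition quasi_similar :: "'a::complex_normed_vector set \<Rightarrow> ('a \<Rightarrow> 'a)
     \<Rightarrow> 'b::complex_normed_vector set \<Rightarrow> ('b \<Rightarrow> 'b) \<Rightarrow> bool" where
  "quasi_similar DA A DB B \<longleftrightarrow> (\<exists>T. quasi_sim_witness T DA A DB B)"

definition resolvent_set :: "'a::complex_normed_vector set \<Rightarrow> ('a \<Rightarrow> 'a) \<Rightarrow> complex set" where
  "resolvent_set D A = {l. inj_on (\<lambda>x. A x - l *\<^sub>C x) D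
      \<and> (\<lambda>x. A x - l *\<^sub>C x) ` D = UNIV
      \<and> (\<exists>C. \<forall>y. norm (inv_into D (\<lambda>x. A x - l *\<^sub>C x) y) \<le> C * norm y)}"

definition spectrum :: "'a::complex_normed_vector set \<Rightarrow> ('a \<Rightarrow> 'a) \<Rightarrow> complex set" where
  "spectrum D A = - resolvent_set D A"

definition point_spectrum :: "'a::complex_normed_vector set \<Rightarrow> ('a \<Rightarrow> 'a) \<Rightarrow> complex set" where
  "point_spectrum D A = {l. \<exists>x\<in>D. x \<noteq> 0 \<and> A x = l *\<^sub>C x}"

definition residual_spectrum :: "'a::complex_normed_vector set \<Rightarrow> ('a \<Rightarrow> 'a) \<Rightarrow> complex set" where
  "residual_spectrum D A = {l. inj_on (\<lambda>x. A x - l *\<^sub>C x) D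
      \<and> closure ((\<lambda>x. A x - l *\<^sub>C x) ` D) \<noteq> UNIV}"

definition eigenspace :: "'a::complex_normed_vector set \<Rightarrow> ('a \<Rightarrow> 'a) \<Rightarrow> complex \<Rightarrow> 'a set" where
  "eigenspace D A l = {x \<in> D. A x = l *\<^sub>C x}"

definition multiplicity :: "'a::complex_normed_vector set \<Rightarrow> ('a \<Rightarrow> 'a) \<Rightarrow> complex \<Rightarrow> enat" where 
  "multiplicity D A l = cdim (eigenspace D A l)"

definition is_core :: "'b::complex_normed_vector set \<Rightarrow> 'b set \<Rightarrow> ('b \<Rightarrow> 'b) \<Rightarrow> bool" where
  "is_core C DB B \<longleftrightarrow> C \<subseteq> DB \<and> closure (graph C B) = graph DB B"

end

theory Submission
  imports Defs
begin

lemma cbl_bounded_linear: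
  assumes "cbounded_linear T" shows "bounded_linear T"
proof -
  have add: "\<And>x y. T (x + y) = T x + T y" and sc: "\<And>c x. T (c *\<^sub>C x) = c *\<^sub>C T x"
    and K: "\<exists>K. \<forall>x. norm (T x) \<le> norm x * K"
    using assms unfolding cbounded_linear_def by auto
  have "linear T"
  proof
    fix r x show "T (r *\<^sub>R x) = r *\<^sub>R T x" by (simp add: scaleR_scaleC sc)
  qed (simp add: add)
  then show ?thesis using K by (simp add: bounded_linear_axioms_def bounded_linear_def)
qed

lemma scaleC_bounded_linear: "bounded_linear (\<lambda>z::'a::complex_normed_vector. l *\<^sub>C z)"
proof -
  have "linear (\<lambda>z::'a. l *\<^sub>C z)"
  proof
    fix r and x :: 'a show "l *\<^sub>C (r *\<^sub>R x) = r *\<^sub>R (l *\<^sub>C x)"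
      by (simp add: scaleR_scaleC scaleC_scaleC mult.commute)
  qed (simp add: scaleC_add_right)
  moreover have "\<forall>x::'a. norm (l *\<^sub>C x) \<le> norm x * cmod l"
    by (simp add: norm_scaleC mult.commute)
  ultimately show ?thesis by (auto simp: bounded_linear_axioms_def bounded_linear_def)
qed

lemma cbl_scale: "cbounded_linear T \<Longrightarrow> T (c *\<^sub>C x) = c *\<^sub>C T x"
  unfolding cbounded_linear_def by auto

lemma cbl_inj_independent:
  fixes T :: "'a::complex_normed_vector \<Rightarrow> 'b::complex_normed_vector"
  assumes T: "cbounded_linear T" and inj: "inj T" and S: "cindependent S"
  shows "cindependent (T ` S)"
  unfolding cindependent_def
proof (intro allI impI ballI)
  fix F u y
  assume F: "finite F" "F \<subseteq> T ` S" and s: "(\<Sum>x\<in>F. u x *\<^sub>C x) = 0" and y: "y \<in> F"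
  have bl: "bounded_linear T" using cbl_bounded_linear[OF T] .
  then have lin: "linear T" by (rule bounded_linear.linear)
  define G where "G = {x\<in>S. T x \<in> F}"
  have FG: "F = T ` G" using F unfolding G_def by auto
  have injG: "inj_on T G" using inj by (simp add: inj_on_def inj_def)
  have fG: "finite G" using F(1) FG injG finite_image_iff by metis
  have "(\<Sum>x\<in>F. u x *\<^sub>C x) = (\<Sum>x\<in>G. u (T x) *\<^sub>C T x)"
    unfolding FG by (simp add: sum.reindex[OF injG])
  also have "\<dots> = T (\<Sum>x\<in>G. u (T x) *\<^sub>C x)"
    by (simp add: linear_sum[OF lin] cbl_scale[OF T])
  finally have "T (\<Sum>x\<in>G. u (T x) *\<^sub>C x) = T 0" using s linear_0[OF lin] by simp
  then have "(\<Sum>x\<in>G. u (T x) *\<^sub>C x) = 0" using inj by (simp add: inj_eq)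
  moreover have "G \<subseteq> S" unfolding G_def by auto
  ultimately have "\<forall>x\<in>G. u (T x) = 0" using S fG unfolding cindependent_def
    
    by (elim allE[where x=G] allE[where x="\<lambda>x. u (T x)"]) blast
  then show "u y = 0" using y FG by auto
qed


lemma part_i:
  fixes DA :: "'h::complex_normed_vector set" and DB :: "'k::complex_normed_vector set"
  assumes T: "quasi_sim_witness T DA A DB B"
  shows "point_spectrum DA A \<subseteq> point_spectrum DB B
          \<and> (\<forall>l\<in>point_spectrum DA A. multiplicity DA A l \<le> multiplicity DB B l)"
proof -
  have cb: "cbounded_linear T" and im: "T ` DA \<subseteq> DB" and ir: "\<And>x. x \<in> DA \<Longrightarrow> B (T x) = T (A x)"
    and inj: "inj T" using T unfolding quasi_sim_witness_def intertwining_def by auto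
  have lin: "linear T" using cbl_bounded_linear[OF cb] bounded_linear.linear by blast
  have eig: "T ` eigenspace DA A l \<subseteq> eigenspace DB B l" for l
    using im ir cbl_scale[OF cb] unfolding eigenspace_def by auto
  have "point_spectrum DA A \<subseteq> point_spectrum DB B"
  proof
    fix l assume "l \<in> point_spectrum DA A"
    then obtain x where x: "x \<in> DA" "x \<noteq> 0" "A x = l *\<^sub>C x" unfolding point_spectrum_def by auto
    have "T x \<noteq> 0" using x(2) inj linear_0[OF lin] by (metis inj_eq)
    moreover have "B (T x) = l *\<^sub>C T x" using x ir cbl_scale[OF cb] by simp
    ultimately show "l \<in> point_spectrum DB B" using x im unfolding point_spectrum_def by blast
  qed
  moreover have "multiplicity DA A l \<le> multiplicity DB B l" for l
    unfolding multiplicity_def cdim_def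
  proof (rule SUP_least)
    fix S assume "S \<in> {S. finite S \<and> S \<subseteq> eigenspace DA A l \<and> cindependent S}"
    then have S: "finite S" "S \<subseteq> eigenspace DA A l" "cindependent S" by auto
    have "T ` S \<in> {S. finite S \<and> S \<subseteq> eigenspace DB B l \<and> cindependent S}"
      using S eig cbl_inj_independent[OF cb inj S(3)] by auto
    then have "enat (card (T ` S)) \<le> (SUP S \<in> {S. finite S \<and> S \<subseteq> eigenspace DB B l \<and> cindependent S}. enat (card S))"
      by (rule SUP_upper)
    moreover have "card (T ` S) = card S" using inj by (simp add: card_image inj_on_def inj_def)
    ultimately show "enat (card S) \<le> (SUP S \<in> {S. finite S \<and> S \<subseteq> eigenspace DB B l \<and> cindependent S}. enat (card S))"
      by simp
  qed
  ultimately show ?thesis by blast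
qed

lemma part_ii:
  fixes DA :: "'h::complex_normed_vector set" and DB :: "'k::complex_normed_vector set"
  assumes T: "quasi_sim_witness T DA A DB B"
  shows "residual_spectrum DB B \<subseteq> residual_spectrum DA A"
proof
  have cb: "cbounded_linear T" and im: "T ` DA \<subseteq> DB" and ir: "\<And>x. x \<in> DA \<Longrightarrow> B (T x) = T (A x)"
    and inj: "inj T" and dense: "closure (range T) = UNIV"
    using T unfolding quasi_sim_witness_def intertwining_def densely_defined_def by auto
  have bl: "bounded_linear T" using cbl_bounded_linear[OF cb] .
  have lin: "linear T" using bl bounded_linear.linear by blast
  fix l assume "l \<in> residual_spectrum DB B"
  then have injB: "inj_on (\<lambda>x. B x - l *\<^sub>C x) DB" and nd: "closure ((\<lambda>x. B x - l *\<^sub>C x) ` DB) \<noteq> UNIV"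
    unfolding residual_spectrum_def by auto
  have key: "T (A x - l *\<^sub>C x) = B (T x) - l *\<^sub>C T x" if "x \<in> DA" for x
    using that ir cbl_scale[OF cb] linear_diff[OF lin] by simp
  have "inj_on (\<lambda>x. A x - l *\<^sub>C x) DA"
  proof (rule inj_onI)
    fix x y assume xy: "x \<in> DA" "y \<in> DA" "A x - l *\<^sub>C x = A y - l *\<^sub>C y"
    then have "B (T x) - l *\<^sub>C T x = B (T y) - l *\<^sub>C T y" using key by metis
    then have "T x = T y" using injB xy im by (auto simp: inj_on_def)
    then show "x = y" using inj by (simp add: inj_eq)
  qed
  moreover have "closure ((\<lambda>x. A x - l *\<^sub>C x) ` DA) \<noteq> UNIV"
  proof
    assume cl: "closure ((\<lambda>x. A x - l *\<^sub>C x) ` DA) = UNIV"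
    have "T ` closure ((\<lambda>x. A x - l *\<^sub>C x) ` DA) \<subseteq> closure ((\<lambda>x. B x - l *\<^sub>C x) ` DB)"
    proof (rule image_closure_subset)
      show "continuous_on (closure ((\<lambda>x. A x - l *\<^sub>C x) ` DA)) T"
        using bl linear_continuous_on by blast
      show "T ` (\<lambda>x. A x - l *\<^sub>C x) ` DA \<subseteq> closure ((\<lambda>x. B x - l *\<^sub>C x) ` DB)"
        using key im closure_subset by fastforce
    qed simp
    then have "range T \<subseteq> closure ((\<lambda>x. B x - l *\<^sub>C x) ` DB)" using cl by simp
    then have "closure (range T) \<subseteq> closure ((\<lambda>x. B x - l *\<^sub>C x) ` DB)"
      by (simp add: closure_minimal)
    then show False using dense nd by auto
  qed
  ultimately show "l \<in> residual_spectrum DA A" unfolding residual_spectrum_def by auto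
qed

lemma part_iii:
  fixes DA :: "'h::complex_normed_vector set" and DB :: "'k::complex_normed_vector set"
  assumes T: "quasi_sim_witness T DA A DB B" and eq: "T ` DA = DB"
  shows "point_spectrum DB B = point_spectrum DA A"
proof
  have cb: "cbounded_linear T" and ir: "\<And>x. x \<in> DA \<Longrightarrow> B (T x) = T (A x)"
    and inj: "inj T" using T unfolding quasi_sim_witness_def intertwining_def by auto
  have lin: "linear T" using cbl_bounded_linear[OF cb] bounded_linear.linear by blast
  show "point_spectrum DA A \<subseteq> point_spectrum DB B" using part_i[OF T] by blast
  show "point_spectrum DB B \<subseteq> point_spectrum DA A"
  proof
    fix l assume "l \<in> point_spectrum DB B"
    then obtain y where y: "y \<in> DB" "y \<noteq> 0" "B y = l *\<^sub>C y" unfolding point_spectrum_def by auto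
    then obtain x where x: "x \<in> DA" "y = T x" using eq by auto
    have "x \<noteq> 0" using x y linear_0[OF lin] by auto
    moreover have "T (A x) = T (l *\<^sub>C x)" using ir[OF x(1)] x y cbl_scale[OF cb] by simp
    then have "A x = l *\<^sub>C x" using inj by (simp add: inj_eq)
    ultimately show "l \<in> point_spectrum DA A" using x unfolding point_spectrum_def by blast
  qed
qed


lemma part_iv:
  fixes DA :: "'h::complex_normed_vector set" and DB :: "'k::complex_normed_vector set"
  assumes T: "quasi_sim_witness T DA A DB B" and Cb: "\<exists>C. \<forall>x. norm x \<le> C * norm (T x)"
    and core: "is_core (T ` DA) DB B"
  shows "point_spectrum DB B \<subseteq> spectrum DA A"
proof
  have cb: "cbounded_linear T" and ir: "\<And>x. x \<in> DA \<Longrightarrow> B (T x) = T (A x)"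
    and inj: "inj T" using T unfolding quasi_sim_witness_def intertwining_def by auto
  have bl: "bounded_linear T" using cbl_bounded_linear[OF cb] .
  have lin: "linear T" using bl bounded_linear.linear by blast
  obtain C where C: "\<And>x. norm x \<le> C * norm (T x)" using Cb by auto
  fix l assume "l \<in> point_spectrum DB B"
  then obtain y where y: "y \<in> DB" "y \<noteq> 0" "B y = l *\<^sub>C y" unfolding point_spectrum_def by auto
  show "l \<in> spectrum DA A"
  proof (rule ccontr)
    assume "l \<notin> spectrum DA A"
    then have injA: "inj_on (\<lambda>x. A x - l *\<^sub>C x) DA"
      and R: "\<exists>C. \<forall>y. norm (inv_into DA (\<lambda>x. A x - l *\<^sub>C x) y) \<le> C * norm y"
      unfolding spectrum_def resolvent_set_def by auto
    obtain R where R: "\<And>z. norm (inv_into DA (\<lambda>x. A x - l *\<^sub>C x) z) \<le> R * norm z" using R by auto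
    have "(y, B y) \<in> graph DB B" using y unfolding graph_def by blast
    then have "(y, B y) \<in> closure (graph (T ` DA) B)" using core unfolding is_core_def by simp
    then obtain f where f: "\<And>n. f n \<in> graph (T ` DA) B" "f \<longlonglongrightarrow> (y, B y)"
      unfolding closure_sequential by blast
    have "\<forall>n. \<exists>x. x \<in> DA \<and> f n = (T x, B (T x))"
    proof
      fix n show "\<exists>x. x \<in> DA \<and> f n = (T x, B (T x))"
        using f(1)[of n] unfolding graph_def by (auto simp: image_iff)
    qed
    then obtain x where xx: "\<forall>n. x n \<in> DA \<and> f n = (T (x n), B (T (x n)))"
      using choice[of "\<lambda>n x. x \<in> DA \<and> f n = (T x, B (T x))"] by blast
    have x: "\<And>n. x n \<in> DA" "\<And>n. f n = (T (x n), B (T (x n)))" using xx by auto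
    have t1: "(\<lambda>n. T (x n)) \<longlonglongrightarrow> y" using tendsto_fst[OF f(2)] x(2) by simp
    have t2: "(\<lambda>n. T (A (x n))) \<longlonglongrightarrow> l *\<^sub>C y" using tendsto_snd[OF f(2)] x ir y(3) by simp
    have t3: "(\<lambda>n. l *\<^sub>C T (x n)) \<longlonglongrightarrow> l *\<^sub>C y"
      using bounded_linear.tendsto[OF scaleC_bounded_linear t1] .
    have key: "T (A (x n) - l *\<^sub>C x n) = T (A (x n)) - l *\<^sub>C T (x n)" for n
      using cbl_scale[OF cb] linear_diff[OF lin] by simp
    have t4: "(\<lambda>n. T (A (x n) - l *\<^sub>C x n)) \<longlonglongrightarrow> 0"
      unfolding key using tendsto_diff[OF t2 t3] by simp
    have t5: "(\<lambda>n. A (x n) - l *\<^sub>C x n) \<longlonglongrightarrow> 0"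
    proof (rule Lim_null_comparison)
      show "\<forall>\<^sub>F n in sequentially. norm (A (x n) - l *\<^sub>C x n) \<le> C * norm (T (A (x n) - l *\<^sub>C x n))"
        by (intro always_eventually allI C)
      show "(\<lambda>n. C * norm (T (A (x n) - l *\<^sub>C x n))) \<longlonglongrightarrow> 0"
        using tendsto_mult_right_zero[OF tendsto_norm_zero[OF t4]] by simp
    qed
    have t6: "x \<longlonglongrightarrow> 0"
    proof (rule Lim_null_comparison)
      have "norm (x n) \<le> R * norm (A (x n) - l *\<^sub>C x n)" for n
        using R[of "A (x n) - l *\<^sub>C x n"] inv_into_f_f[OF injA x(1)[of n]] by simp
      then show "\<forall>\<^sub>F n in sequentially. norm (x n) \<le> R * norm (A (x n) - l *\<^sub>C x n)"
        by (intro always_eventually allI)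
      show "(\<lambda>n. R * norm (A (x n) - l *\<^sub>C x n)) \<longlonglongrightarrow> 0"
        using tendsto_mult_right_zero[OF tendsto_norm_zero[OF t5]] by simp
    qed
    have "(\<lambda>n. T (x n)) \<longlonglongrightarrow> T 0" using bounded_linear.tendsto[OF bl t6] .
    then have "y = T 0" using t1 LIMSEQ_unique by blast
    then show False using y(2) linear_0[OF lin] by simp
  qed
qed

theorem proposition3p10:
  fixes DA :: "'h::chilbert_space set" and A :: "'h \<Rightarrow> 'h"
    and DB :: "'k::chilbert_space set" and B :: "'k \<Rightarrow> 'k"
    and T :: "'h \<Rightarrow> 'k"
  assumes A_closed: "closed_op DA A" and A_dense: "densely_defined DA"
    and B_closed: "closed_op DB B" and B_dense: "densely_defined DB"
    and T_qs: "quasi_sim_witness T DA A DB B"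
  shows "(point_spectrum DA A \<subseteq> point_spectrum DB B
          \<and> (\<forall>l\<in>point_spectrum DA A. multiplicity DA A l \<le> multiplicity DB B l))
       \<and> residual_spectrum DB B \<subseteq> residual_spectrum DA A
       \<and> (T ` DA = DB \<longrightarrow> point_spectrum DB B = point_spectrum DA A)
       \<and> ((\<exists>C. \<forall>x. norm x \<le> C * norm (T x)) \<and> is_core (T ` DA) DB B
            \<longrightarrow> point_spectrum DB B \<subseteq> spectrum DA A)"
  using part_i[OF T_qs] part_ii[OF T_qs] part_iii[OF T_qs] part_iv[OF T_qs] by blast

end
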